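(* Let $\mathcal M$ be a Hilbert space of $\mathcal Y$-valued functions whose elements belong to $\mathcal H_{\mathcal Y}(k_d)$, and assume $\mathcal M$ is invariant under $M^*_{\lambda_j}$ for $j=1,\dots,d$. (1) If $\sum_{j=1}^d\|M^*_{\lambda_j}f\|^2_{\mathcal M}\le\|f\|^2_{\mathcal M}-\|f(0)\|^2_{\mathcal Y}$ for every $f\in\mathcal M$, then $\mathcal M=\operatorname{Ran}\widehat{\mathcal O}^{\mathbf a}_{C,\mathbf A}$ for a contractive pair $(C,\mathbf A)$ with $\mathbf A=(A_1,\dots,A_d)$ commutative which is exactly observable with respect to $\mathcal M$. In particular $\mathcal M$ is contractively included in $\mathcal H_{\mathcal Y}(k_d)$. (2) If $\sum_{j=1}^d\|M^*_{\lambda_j}f\|^2_{\mathcal M}=\|f\|^2_{\mathcal M}-\|f(0)\|^2_{\mathcal Y}$ for every $f\in\mathcal M$, then $\mathcal M=\operatorname{Ran}\widehat{\mathcal O}^{\mathbf a}_{C,\mathbf A}$ for an isometric pair $(C,\mathbf A)$ with $\mathbf A$ commutative which is exactly observable with respect to $\mathcal M$; $\mathcal M$ is contractively included in $\mathcal H_{\mathcal Y}(k_d)$, and it is isometrically included in $\mathcal H_{\mathcal Y}(k_d)$ if and only if $$\lim_{N\to\infty}\sum_{\mathbf n\in\mathbb Z^d_+,|\mathbf n|=N}\frac{N!}{\mathbf n!}\|(\mathbf M^*_{\boldsymbol\lambda})^{\mathbf n}f\|^2_{\mathcal M}=0\quad\text{for every }f\in\mathcal M.$$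
   Context: For $\mathbf n\in\mathbb Z^d_+$: $|\mathbf n|=\sum n_k$, $\mathbf n!=\prod n_k!$, $\boldsymbol\lambda^{\mathbf n}=\prod\lambda_k^{n_k}$. Arveson space $\mathcal H_{\mathcal Y}(k_d)$: functions $\sum_{\mathbf n}f_{\mathbf n}\boldsymbol\lambda^{\mathbf n}$ on the unit ball $\mathbb B^d$ with $\|f\|^2=\sum_{\mathbf n}\frac{\mathbf n!}{|\mathbf n|!}\|f_{\mathbf n}\|^2_{\mathcal Y}<\infty$; $M_{\lambda_j}$: multiplication by $\lambda_j$ there; $M^*_{\lambda_j}$: its adjoint in $\mathcal H_{\mathcal Y}(k_d)$; $(\mathbf M^*_{\boldsymbol\lambda})^{\mathbf n}=(M^*_{\lambda_1})^{n_1}\cdots(M^*_{\lambda_d})^{n_d}$. For a commuting tuple $\mathbf A$ on a Hilbert space $\mathcal X$ and $C\in\mathcal L(\mathcal X,\mathcal Y)$, $\widehat{\mathcal O}^{\mathbf a}_{C,\mathbf A}x=\sum_{\mathbf n}\frac{|\mathbf n|!}{\mathbf n!}(C\mathbf A^{\mathbf n}x)\boldsymbol\lambda^{\mathbf n}=C(I-\sum_j\lambda_jA_j)^{-1}x$. Contractive pair: $C^*C+\sum_jA_j^*A_j\le I$; isometric: equality. "Exactly observable with respect to $\mathcal M$" means that $\widehat{\mathcal O}^{\mathbf a}_{C,\mathbf A}$, regarded as an operator from $\mathcal X$ into $\mathcal M$, is bounded and bounded below. $\mathcal M$ is contractively (resp. isometrically) included in $\mathcal H_{\mathcal Y}(k_d)$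 if $\|f\|_{\mathcal H_{\mathcal Y}(k_d)}\le\|f\|_{\mathcal M}$ (resp. $=$) for $f\in\mathcal M$. *)

theory Defs
  imports "HOL-Analysis.Analysis"
begin

text \<open>The library only provides real inner product spaces.  A complex Hilbert space is
  modelled as a real Hilbert space (whose real inner product is the real part of the
  complex one) together with a complex scalar multiplication extending the real one and
  compatible with the norm; by polarization this is exactly a complex Hilbert space.\<close>

class chilbert = real_inner + complete_space +
  fixes scaleC :: "complex \<Rightarrow> 'a \<Rightarrow> 'a" (infixr "*\<^sub>C" 75)
  assumes scaleC_add_right: "a *\<^sub>C (x + y) = a *\<^sub>C x + a *\<^sub>C y"
    and scaleC_add_left: "(a + b) *\<^sub>C x = a *\<^sub>C x + b *\<^sub>C x"
    and scaleC_scaleC: "a *\<^sub>C (b *\<^sub>C x) = (a * b) *\<^sub>C x"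
    and scaleC_one: "1 *\<^sub>C x = x"
    and scaleR_scaleC: "r *\<^sub>R x = complex_of_real r *\<^sub>C x"
    and norm_scaleC: "norm (a *\<^sub>C x) = cmod a * norm x"

definition bclin :: "('a::chilbert \<Rightarrow> 'b::chilbert) \<Rightarrow> bool" where
  "bclin T \<longleftrightarrow> bounded_linear T \<and> (\<forall>a x. T (a *\<^sub>C x) = a *\<^sub>C T x)"

text \<open>A multi-index \<open>n \<in> \<int>\<^sup>d\<^sub>+\<close> is a function \<open>nat \<Rightarrow> nat\<close> vanishing from \<open>d\<close> on
  (coordinates \<open>0..d-1\<close> stand for \<open>1..d\<close>).  A function \<open>\<Sum> f\<^sub>n \<lambda>\<^sup>n\<close> is represented by
  its coefficient family \<open>n \<mapsto> f\<^sub>n\<close>.\<close>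

definition mi :: "nat \<Rightarrow> (nat \<Rightarrow> nat) set" where
  "mi d = {n. \<forall>j\<ge>d. n j = 0}"

definition mabs :: "nat \<Rightarrow> (nat \<Rightarrow> nat) \<Rightarrow> nat" where
  "mabs d n = (\<Sum>j<d. n j)"

definition mfact :: "nat \<Rightarrow> (nat \<Rightarrow> nat) \<Rightarrow> nat" where
  "mfact d n = (\<Prod>j<d. fact (n j))"

definition arv_w :: "nat \<Rightarrow> (nat \<Rightarrow> nat) \<Rightarrow> real" where
  "arv_w d n = real (mfact d n) / fact (mabs d n)"

definition arv :: "nat \<Rightarrow> ((nat \<Rightarrow> nat) \<Rightarrow> 'y::chilbert) set" where
  "arv d = {f. (\<forall>n. n \<notin> mi d \<longrightarrow> f n = 0) \<and>
                (\<lambda>n. arv_w d n * (norm (f n))\<^sup>2) summable_on mi d}"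

definition arv_norm :: "nat \<Rightarrow> ((nat \<Rightarrow> nat) \<Rightarrow> 'y::chilbert) \<Rightarrow> real" where
  "arv_norm d f = sqrt (\<Sum>\<^sub>\<infinity>n\<in>mi d. arv_w d n * (norm (f n))\<^sup>2)"

text \<open>Real part of the Arveson inner product.\<close>
definition arv_inner :: "nat \<Rightarrow> ((nat \<Rightarrow> nat) \<Rightarrow> 'y::chilbert) \<Rightarrow> ((nat \<Rightarrow> nat) \<Rightarrow> 'y) \<Rightarrow> real" where
  "arv_inner d f g = (\<Sum>\<^sub>\<infinity>n\<in>mi d. arv_w d n * inner (f n) (g n))"

definition mult_lam :: "nat \<Rightarrow> ((nat \<Rightarrow> nat) \<Rightarrow> 'y::chilbert) \<Rightarrow> ((nat \<Rightarrow> nat) \<Rightarrow> 'y)" where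
  "mult_lam j f = (\<lambda>n. if 0 < n j then f (n(j := n j - 1)) else 0)"

text \<open>\<open>M\<^sup>*\<^sub>\<lambda>\<^sub>j\<close>: the adjoint of \<open>M\<^sub>\<lambda>\<^sub>j\<close> in the Arveson space (for complex-linear operators the
  adjoint with respect to the real part of the inner product is the complex adjoint).\<close>
definition arv_adj :: "nat \<Rightarrow> nat \<Rightarrow> ((nat \<Rightarrow> nat) \<Rightarrow> 'y::chilbert) \<Rightarrow> ((nat \<Rightarrow> nat) \<Rightarrow> 'y)" where
  "arv_adj d j f = (THE g. g \<in> arv d \<and>
      (\<forall>h\<in>arv d. arv_inner d (mult_lam j h) f = arv_inner d h g))"

definition mpow :: "nat \<Rightarrow> (nat \<Rightarrow> 'a \<Rightarrow> 'a) \<Rightarrow> (nat \<Rightarrow> nat) \<Rightarrow> 'a \<Rightarrow> 'a" where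
  "mpow d T n = foldr (\<lambda>j g. (T j ^^ n j) \<circ> g) [0..<d] id"

definition obs :: "nat \<Rightarrow> ('x \<Rightarrow> 'y::chilbert) \<Rightarrow> (nat \<Rightarrow> 'x \<Rightarrow> 'x) \<Rightarrow> 'x \<Rightarrow> ((nat \<Rightarrow> nat) \<Rightarrow> 'y)" where
  "obs d C A x = (\<lambda>n. if n \<in> mi d
      then (fact (mabs d n) / real (mfact d n)) *\<^sub>R C (mpow d A n x) else 0)"

definition commutative_tuple :: "nat \<Rightarrow> (nat \<Rightarrow> 'x \<Rightarrow> 'x) \<Rightarrow> bool" where
  "commutative_tuple d A \<longleftrightarrow> (\<forall>i<d. \<forall>j<d. A i \<circ> A j = A j \<circ> A i)"

text \<open>\<open>C\<^sup>*C + \<Sum> A\<^sub>j\<^sup>*A\<^sub>j \<le> I\<close>, resp. \<open>= I\<close>, written out as quadratic forms.\<close>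
definition contractive_pair :: "nat \<Rightarrow> ('x::chilbert \<Rightarrow> 'y::chilbert) \<Rightarrow> (nat \<Rightarrow> 'x \<Rightarrow> 'x) \<Rightarrow> bool" where
  "contractive_pair d C A \<longleftrightarrow>
     bclin C \<and> (\<forall>j<d. bclin (A j)) \<and>
     (\<forall>x. (norm (C x))\<^sup>2 + (\<Sum>j<d. (norm (A j x))\<^sup>2) \<le> (norm x)\<^sup>2)"

definition isometric_pair :: "nat \<Rightarrow> ('x::chilbert \<Rightarrow> 'y::chilbert) \<Rightarrow> (nat \<Rightarrow> 'x \<Rightarrow> 'x) \<Rightarrow> bool" where
  "isometric_pair d C A \<longleftrightarrow>
     bclin C \<and> (\<forall>j<d. bclin (A j)) \<and>
     (\<forall>x. (norm (C x))\<^sup>2 + (\<Sum>j<d. (norm (A j x))\<^sup>2) = (norm x)\<^sup>2)"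

text \<open>The space \<open>\<M>\<close> is given as a complex Hilbert space \<open>'m\<close> together with the injective
  complex-linear map \<open>\<iota>\<close> sending an element to the function (coefficient family) it is.\<close>
definition exactly_observable ::
  "('m::chilbert \<Rightarrow> ((nat \<Rightarrow> nat) \<Rightarrow> 'y::chilbert)) \<Rightarrow> nat \<Rightarrow> ('x::chilbert \<Rightarrow> 'y) \<Rightarrow> (nat \<Rightarrow> 'x \<Rightarrow> 'x) \<Rightarrow> bool" where
  "exactly_observable \<iota> d C A \<longleftrightarrow>
     range (obs d C A) \<subseteq> range \<iota> \<and>
     (\<exists>c K. 0 < c \<and> (\<forall>x. c * norm x \<le> norm (inv \<iota> (obs d C A x)) \<and>
                           norm (inv \<iota> (obs d C A x)) \<le> K * norm x))"

definition fun_clinear :: "('m::chilbert \<Rightarrow> ((nat \<Rightarrow> nat) \<Rightarrow> 'y::chilbert)) \<Rightarrow> bool" where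
  "fun_clinear \<iota> \<longleftrightarrow> (\<forall>x y. \<iota> (x + y) = (\<lambda>n. \<iota> x n + \<iota> y n)) \<and>
                      (\<forall>a x. \<iota> (a *\<^sub>C x) = (\<lambda>n. a *\<^sub>C \<iota> x n))"

definition contractively_included :: "('m::chilbert \<Rightarrow> ((nat \<Rightarrow> nat) \<Rightarrow> 'y::chilbert)) \<Rightarrow> nat \<Rightarrow> bool" where
  "contractively_included \<iota> d \<longleftrightarrow> (\<forall>m. arv_norm d (\<iota> m) \<le> norm m)"

definition isometrically_included :: "('m::chilbert \<Rightarrow> ((nat \<Rightarrow> nat) \<Rightarrow> 'y::chilbert)) \<Rightarrow> nat \<Rightarrow> bool" where
  "isometrically_included \<iota> d \<longleftrightarrow> (\<forall>m. arv_norm d (\<iota> m) = norm m)"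

end

theory Submission
  imports Defs "HOL-Combinatorics.Multiset_Permutations"
begin


definition ej :: "nat \<Rightarrow> nat \<Rightarrow> nat" where "ej j = (\<lambda>i. if i = j then 1 else 0)"
definition madd :: "(nat\<Rightarrow>nat) \<Rightarrow> (nat\<Rightarrow>nat) \<Rightarrow> nat \<Rightarrow> nat" where "madd k s = (\<lambda>i. k i + s i)"
definition shop :: "nat \<Rightarrow> (nat\<Rightarrow>nat) \<Rightarrow> ((nat\<Rightarrow>nat) \<Rightarrow> 'y::chilbert) \<Rightarrow> ((nat\<Rightarrow>nat) \<Rightarrow> 'y)" where
  "shop d s f = (\<lambda>k. if k \<in> mi d then (arv_w d (madd k s) / arv_w d k) *\<^sub>R f (madd k s) else 0)"

lemma mi_madd: "k \<in> mi d \<Longrightarrow> s \<in> mi d \<Longrightarrow> madd k s \<in> mi d"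
  by (simp add: mi_def madd_def)

lemma ej_mi: "j < d \<Longrightarrow> ej j \<in> mi d"
  by (simp add: mi_def ej_def)

lemma zero_mi: "(\<lambda>_. 0) \<in> mi d"
  by (simp add: mi_def)

lemma mfact_pos: "mfact d n > 0"
  unfolding mfact_def by (simp add: prod_pos)

lemma arv_w_pos: "arv_w d n > 0"
  using mfact_pos[of d n] by (simp add: arv_w_def)

lemma madd_zero[simp]: "madd k (\<lambda>_. 0) = k" "madd (\<lambda>_. 0) k = k"
  by (simp_all add: madd_def)

lemma mabs_madd: "mabs d (madd k s) = mabs d k + mabs d s"
  by (simp add: mabs_def madd_def sum.distrib)

lemma mabs_ej: "j < d \<Longrightarrow> mabs d (ej j) = 1"
  by (simp add: mabs_def ej_def)

lemma madd_ej: "madd k (ej j) = k(j := Suc (k j))"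
  by (auto simp: madd_def ej_def)

lemma mfact_step: assumes "j < d" shows "mfact d (madd k (ej j)) = mfact d k * (k j + 1)"
proof -
  have "mfact d (madd k (ej j)) = fact (Suc (k j)) * (\<Prod>i\<in>{..<d}-{j}. fact (k i))"
    unfolding mfact_def using assms
    by (subst prod.remove[of _ j]) (auto simp: madd_ej intro!: prod.cong)
  moreover have "mfact d k = fact (k j) * (\<Prod>i\<in>{..<d}-{j}. fact (k i))"
    unfolding mfact_def using assms by (subst prod.remove[of _ j]) auto
  ultimately show ?thesis by (simp add: algebra_simps)
qed

lemma kj_le_mabs: "j < d \<Longrightarrow> k j \<le> mabs d k"
  unfolding mabs_def by (rule member_le_sum) auto

lemma w_step: assumes "j < d" shows "arv_w d (madd k (ej j)) \<le> arv_w d k"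
proof -
  have "arv_w d (madd k (ej j)) = real (mfact d k) * (k j + 1) / ((mabs d k + 1) * fact (mabs d k))"
    using assms by (simp add: arv_w_def mfact_step mabs_madd mabs_ej algebra_simps)
  also have "\<dots> \<le> real (mfact d k) * (mabs d k + 1) / ((mabs d k + 1) * fact (mabs d k))"
    using kj_le_mabs[OF assms, of k]
    by (intro divide_right_mono mult_left_mono) auto
  also have "\<dots> = arv_w d k"
  proof -
    have "(real (mabs d k) + 1) \<noteq> 0" by simp
    moreover have "fact (mabs d k) > (0::real)" by simp
    have aux: "\<And>(f::real) (m::real) a. f > 0 \<Longrightarrow> m \<ge> 0 \<Longrightarrow> a * (m+1) / ((m+1) * f) = a / f"
    proof -
      fix f m a :: real assume "f > 0" "m \<ge> 0"
      then have "m + 1 \<noteq> 0" by simp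
      then show "a * (m+1) / ((m+1) * f) = a / f" by simp
    qed
    show ?thesis unfolding arv_w_def
      using aux[of "fact (mabs d k)" "real (mabs d k)" "real (mfact d k)"] by (simp add: algebra_simps)
  qed
  finally show ?thesis .
qed

lemma shop_shop:
  assumes "s \<in> mi d" "t \<in> mi d"
  shows "shop d s (shop d t f) = shop d (madd s t) f"
proof
  fix k show "shop d s (shop d t f) k = shop d (madd s t) f k"
  proof (cases "k \<in> mi d")
    case True
    have e: "madd (madd k s) t = madd k (madd s t)" by (simp add: madd_def add.assoc)
    have "madd k s \<in> mi d" using True assms mi_madd by blast
    then show ?thesis using True arv_w_pos[of d "madd k s"]
      by (simp add: shop_def e)
  qed (simp add: shop_def)
qed

lemma shop_zero: assumes "\<forall>n. n \<notin> mi d \<longrightarrow> f n = 0" shows "shop d (\<lambda>_. 0) f = f"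
proof
  fix k
  have "madd k (\<lambda>_. 0) = k" by (simp add: madd_def)
  then show "shop d (\<lambda>_. 0) f k = f k" using assms arv_w_pos[of d k] by (simp add: shop_def)
qed

lemma shop_add: "shop d s (\<lambda>n. f n + g n) = (\<lambda>k. shop d s f k + shop d s g k)"
  by (auto simp: shop_def scaleR_add_right)

lemma scaleR_scaleC_comm: "r *\<^sub>R (a *\<^sub>C (y::'a::chilbert)) = a *\<^sub>C (r *\<^sub>R y)"
  by (simp add: scaleR_scaleC scaleC_scaleC mult.commute)

lemma scaleC_zero: "a *\<^sub>C (0::'a::chilbert) = 0"
proof -
  have "a *\<^sub>C (0::'a) = a *\<^sub>C 0 + a *\<^sub>C 0" using scaleC_add_right[of a "0::'a" 0] by simp
  then show ?thesis by simp
qed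

lemma shop_scaleC: "shop d s (\<lambda>n. a *\<^sub>C f n) = (\<lambda>k. a *\<^sub>C shop d s f k)"
  by (auto simp: shop_def scaleR_scaleC_comm scaleC_zero)



lemma inj_madd_ej: "inj (\<lambda>k. madd k (ej j))"
  by (rule injI) (simp add: madd_def fun_eq_iff)

lemma image_madd_ej:
  assumes "j < d" shows "(\<lambda>k. madd k (ej j)) ` mi d = {n \<in> mi d. n j > 0}"
proof (intro equalityI subsetI)
  fix n assume "n \<in> (\<lambda>k. madd k (ej j)) ` mi d"
  then show "n \<in> {n \<in> mi d. n j > 0}" using assms ej_mi mi_madd by (auto simp: madd_def ej_def)
next
  fix n assume n: "n \<in> {n \<in> mi d. n j > 0}"
  then have "n = madd (n(j := n j - 1)) (ej j)" by (auto simp: madd_def ej_def)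
  moreover have "n(j := n j - 1) \<in> mi d" using n assms by (auto simp: mi_def)
  ultimately show "n \<in> (\<lambda>k. madd k (ej j)) ` mi d" by blast
qed

lemma mult_lam_madd: "mult_lam j h (madd k (ej j)) = h k"
  by (simp add: mult_lam_def madd_ej)

lemma adj_identity:
  assumes "j < d"
  shows "arv_inner d (mult_lam j h) f = arv_inner d h (shop d (ej j) f)"
proof -
  let ?\<phi> = "\<lambda>k. madd k (ej j)"
  let ?g = "\<lambda>n. arv_w d n * inner (mult_lam j h n) (f n)"
  have "arv_inner d (mult_lam j h) f = infsum ?g (mi d)" by (simp add: arv_inner_def)
  also have "\<dots> = infsum ?g (?\<phi> ` mi d)"
  proof (rule infsum_cong_neutral)
    fix x assume "x \<in> mi d - ?\<phi> ` mi d"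
    then have "x j = 0" using image_madd_ej[OF assms] by auto
    then show "?g x = 0" by (simp add: mult_lam_def)
  qed (use image_madd_ej[OF assms] in auto)
  also have "\<dots> = infsum (?g \<circ> ?\<phi>) (mi d)"
    by (rule infsum_reindex) (use inj_madd_ej in \<open>auto simp: inj_on_def\<close>)
  also have "\<dots> = infsum (\<lambda>k. arv_w d k * inner (h k) (shop d (ej j) f k)) (mi d)"
  proof (rule infsum_cong)
    fix k assume k: "k \<in> mi d"
    have "arv_w d k > 0" by (rule arv_w_pos)
    then show "(?g \<circ> ?\<phi>) k = arv_w d k * inner (h k) (shop d (ej j) f k)"
      using k by (simp add: mult_lam_madd shop_def)
  qed
  also have "\<dots> = arv_inner d h (shop d (ej j) f)" by (simp add: arv_inner_def)
  finally show ?thesis .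
qed

lemma shop_arv:
  assumes j: "j < d" and f: "f \<in> arv d"
  shows "shop d (ej j) f \<in> arv d"
proof -
  let ?\<phi> = "\<lambda>k. madd k (ej j)"
  let ?F = "\<lambda>n. arv_w d n * (norm (f n))\<^sup>2"
  have sF: "?F summable_on mi d" using f by (simp add: arv_def)
  have "?F summable_on ?\<phi> ` mi d"
    by (rule summable_on_subset_banach[OF sF]) (use image_madd_ej[OF j] in auto)
  then have s2: "(?F \<circ> ?\<phi>) summable_on mi d"
    by (subst summable_on_reindex[symmetric]) (use inj_madd_ej in \<open>auto simp: inj_on_def\<close>)
  have "(\<lambda>k. arv_w d k * (norm (shop d (ej j) f k))\<^sup>2) summable_on mi d"
  proof (rule summable_on_comparison_test[OF s2])
    fix k assume k: "k \<in> mi d"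
    have wk: "arv_w d k > 0" by (rule arv_w_pos)
    have wp: "arv_w d (?\<phi> k) > 0" by (rule arv_w_pos)
    have le: "arv_w d (?\<phi> k) \<le> arv_w d k" by (rule w_step[OF j])
    let ?r = "arv_w d (?\<phi> k) / arv_w d k"
    have r0: "0 \<le> ?r" "?r \<le> 1" using wk wp le by auto
    have "arv_w d k * (norm (shop d (ej j) f k))\<^sup>2 = arv_w d k * ?r\<^sup>2 * (norm (f (?\<phi> k)))\<^sup>2"
    proof -
      have "norm (shop d (ej j) f k) = ?r * norm (f (?\<phi> k))"
        using k wk wp by (simp add: shop_def abs_of_pos)
      then show ?thesis by (simp add: power_mult_distrib power_divide)
    qed
    also have "\<dots> = arv_w d (?\<phi> k) * ?r * (norm (f (?\<phi> k)))\<^sup>2"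
      using wk by (simp add: power2_eq_square)
    also have "\<dots> \<le> arv_w d (?\<phi> k) * 1 * (norm (f (?\<phi> k)))\<^sup>2"
      using r0 wp by (intro mult_right_mono mult_left_mono) auto
    finally show "arv_w d k * (norm (shop d (ej j) f k))\<^sup>2 \<le> (?F \<circ> ?\<phi>) k" by simp
  qed (simp add: arv_w_pos less_imp_le)
  then show ?thesis by (simp add: arv_def shop_def)
qed

lemma arv_inner_delta:
  assumes k: "k \<in> mi d"
  shows "arv_inner d (\<lambda>n. if n = k then y else 0) g = arv_w d k * inner y (g k)"
proof -
  have "arv_inner d (\<lambda>n. if n = k then y else 0) g
      = infsum (\<lambda>n. arv_w d n * inner (if n = k then y else 0) (g n)) {k}"
    by (unfold arv_inner_def, rule infsum_cong_neutral) (use k in auto)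
  then show ?thesis by simp
qed

lemma delta_arv:
  assumes k: "k \<in> mi d" shows "(\<lambda>n. if n = k then y else 0) \<in> arv d"
proof -
  have "(\<lambda>n. arv_w d n * (norm (if n = k then y else 0))\<^sup>2) summable_on {k}" by simp
  then have "(\<lambda>n. arv_w d n * (norm (if n = k then y else 0))\<^sup>2) summable_on mi d"
    by (rule summable_on_cong_neutral[THEN iffD1, rotated -1]) (use k in auto)
  then show ?thesis using k by (auto simp: arv_def)
qed

lemma arv_unique:
  assumes g1: "g1 \<in> arv d" and g2: "g2 \<in> arv d"
    and eq: "\<forall>h\<in>arv d. arv_inner d h g1 = arv_inner d h g2"
  shows "g1 = g2"
proof
  fix k show "g1 k = g2 k"
  proof (cases "k \<in> mi d")
    case True
    let ?y = "g1 k - g2 k"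
    have "arv_w d k * inner ?y (g1 k) = arv_w d k * inner ?y (g2 k)"
      using eq delta_arv[OF True, of ?y] arv_inner_delta[OF True] by metis
    then have "inner ?y (g1 k) = inner ?y (g2 k)" using arv_w_pos[of d k] by simp
    then have "inner ?y ?y = 0" by (simp add: inner_diff_right)
    then show ?thesis by simp
  next
    case False then show ?thesis using g1 g2 by (simp add: arv_def)
  qed
qed

lemma arv_adj_eq:
  fixes f :: "(nat \<Rightarrow> nat) \<Rightarrow> 'a::chilbert"
  assumes j: "j < d" and f: "f \<in> arv d"
  shows "arv_adj d j f = shop d (ej j) f"
  unfolding arv_adj_def
proof (rule the_equality)
  show "shop d (ej j) f \<in> arv d \<and> (\<forall>h\<in>arv d. arv_inner d (mult_lam j h) f = arv_inner d h (shop d (ej j) f))"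
    using shop_arv[OF j f] adj_identity[OF j] by blast
next
  fix g assume g: "g \<in> arv d \<and> (\<forall>h\<in>arv d. arv_inner d (mult_lam j h) f = arv_inner d h g)"
  show "g = shop d (ej j) f"
  proof (rule arv_unique)
    show "\<forall>h\<in>arv d. arv_inner d h g = arv_inner d h (shop d (ej j) f)"
    proof
      fix h :: "(nat \<Rightarrow> nat) \<Rightarrow> 'a" assume h: "h \<in> arv d"
      have "arv_inner d h g = arv_inner d (mult_lam j h) f" using g h by simp
      also have "\<dots> = arv_inner d h (shop d (ej j) f)" by (rule adj_identity[OF j])
      finally show "arv_inner d h g = arv_inner d h (shop d (ej j) f)" .
    qed
  qed (use g shop_arv[OF j f] in auto)
qed



definition cnt :: "nat list \<Rightarrow> nat \<Rightarrow> nat" where "cnt \<alpha> = (\<lambda>i. count_list \<alpha> i)"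
definition Wd :: "nat \<Rightarrow> nat \<Rightarrow> nat list set" where "Wd d N = {\<alpha>. set \<alpha> \<subseteq> {..<d} \<and> length \<alpha> = N}"
definition Idx :: "nat \<Rightarrow> nat \<Rightarrow> (nat \<Rightarrow> nat) set" where "Idx d N = {n \<in> mi d. mabs d n = N}"

lemma cnt_Nil: "cnt [] = (\<lambda>_. 0)" by (simp add: cnt_def)
lemma cnt_Cons: "cnt (j # \<alpha>) = madd (ej j) (cnt \<alpha>)"
  by (auto simp: cnt_def madd_def ej_def)

lemma cnt_mi: "set \<alpha> \<subseteq> {..<d} \<Longrightarrow> cnt \<alpha> \<in> mi d"
  by (auto simp: cnt_def mi_def count_list_0_iff)

lemma mabs_cnt: "set \<alpha> \<subseteq> {..<d} \<Longrightarrow> mabs d (cnt \<alpha>) = length \<alpha>"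
proof (induction \<alpha>)
  case Nil then show ?case by (simp add: cnt_Nil mabs_def)
next
  case (Cons j \<alpha>) then show ?case by (simp add: cnt_Cons mabs_madd mabs_ej)
qed

lemma finite_Wd: "finite (Wd d N)"
  unfolding Wd_def by (rule finite_lists_length_eq) simp

lemma finite_Idx: "finite (Idx d N)"
proof (rule finite_subset)
  show "Idx d N \<subseteq> {f. \<forall>x. (x \<in> {..<d} \<longrightarrow> f x \<in> {..N}) \<and> (x \<notin> {..<d} \<longrightarrow> f x = 0)}"
  proof
    fix f assume f: "f \<in> Idx d N"
    show "f \<in> {f. \<forall>x. (x \<in> {..<d} \<longrightarrow> f x \<in> {..N}) \<and> (x \<notin> {..<d} \<longrightarrow> f x = 0)}"
    proof (intro CollectI allI conjI impI)
      fix x assume "x \<in> {..<d}"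
      then show "f x \<in> {..N}" using kj_le_mabs[of x d f] f by (simp add: Idx_def)
    next
      fix x assume "x \<notin> {..<d}"
      then show "f x = 0" using f by (simp add: Idx_def mi_def)
    qed
  qed
  show "finite {f. \<forall>x. (x \<in> {..<d} \<longrightarrow> f x \<in> {..N}) \<and> (x \<notin> {..<d} \<longrightarrow> f x = (0::nat))}"
    by (rule finite_set_of_finite_funs) auto
qed

lemma cnt_Wd: "cnt ` Wd d N \<subseteq> Idx d N"
  by (auto simp: Wd_def Idx_def cnt_mi mabs_cnt)

lemma card_fib:
  assumes n: "n \<in> Idx d N"
  shows "card {\<alpha> \<in> Wd d N. cnt \<alpha> = n} * mfact d n = fact N"
proof -
  have fin: "finite {x. 0 < n x}"
  proof (rule finite_subset[of _ "{..<d}"])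
    show "{x. 0 < n x} \<subseteq> {..<d}"
    proof
      fix x assume "x \<in> {x. 0 < n x}"
      then show "x \<in> {..<d}" using n by (cases "x < d") (auto simp: Idx_def mi_def)
    qed
  qed simp
  define M where "M = Abs_multiset n"
  have cM: "count M = n" unfolding M_def by (rule count_Abs_multiset[OF fin])
  have fib: "{\<alpha> \<in> Wd d N. cnt \<alpha> = n} = permutations_of_multiset M"
  proof (intro equalityI subsetI)
    fix \<alpha> assume "\<alpha> \<in> {\<alpha> \<in> Wd d N. cnt \<alpha> = n}"
    then have "cnt \<alpha> = n" by simp
    then have "mset \<alpha> = M" by (intro multiset_eqI) (simp add: count_mset cM cnt_def fun_eq_iff)
    then show "\<alpha> \<in> permutations_of_multiset M" by (simp add: permutations_of_multiset_def)
  next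
    fix \<alpha> assume "\<alpha> \<in> permutations_of_multiset M"
    then have m: "mset \<alpha> = M" by (simp add: permutations_of_multiset_def)
    then have c: "cnt \<alpha> = n" by (auto simp: cnt_def fun_eq_iff cM simp flip: count_mset)
    have s: "set \<alpha> \<subseteq> {..<d}"
    proof
      fix i assume "i \<in> set \<alpha>"
      then have "count_list \<alpha> i > 0" by (metis count_list_0_iff neq0_conv)
      then have "n i > 0" using c by (simp add: cnt_def fun_eq_iff)
      then show "i \<in> {..<d}" using n by (cases "i < d") (auto simp: Idx_def mi_def)
    qed
    have "length \<alpha> = N" using mabs_cnt[OF s] c n by (simp add: Idx_def)
    then show "\<alpha> \<in> {\<alpha> \<in> Wd d N. cnt \<alpha> = n}" using s c by (simp add: Wd_def)
  qed
  obtain \<alpha> where a: "mset \<alpha> = M" using ex_mset by blast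
  then have "\<alpha> \<in> {\<alpha> \<in> Wd d N. cnt \<alpha> = n}" using fib by (simp add: permutations_of_multiset_def)
  then have "length \<alpha> = N" by (simp add: Wd_def)
  then have sz: "size M = N" using a by auto
  have pr: "(\<Prod>x\<in>set_mset M. fact (count M x)) = mfact d n"
    unfolding mfact_def cM
  proof (rule prod.mono_neutral_left)
    show "set_mset M \<subseteq> {..<d}"
    proof
      fix x assume "x \<in># M" then have "n x > 0" using cM by (metis count_greater_zero_iff)
      then show "x \<in> {..<d}" using n by (cases "x < d") (auto simp: Idx_def mi_def)
    qed
    show "\<forall>i\<in>{..<d} - set_mset M. fact (n i) = 1" using cM by (auto simp: not_in_iff)
  qed simp
  show ?thesis using card_permutations_of_multiset_aux[of M] fib sz pr by simp
qed

lemma sum_Wd: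
  fixes g :: "(nat \<Rightarrow> nat) \<Rightarrow> real"
  shows "(\<Sum>\<alpha>\<in>Wd d N. g (cnt \<alpha>)) = (\<Sum>n\<in>Idx d N. (fact N / real (mfact d n)) * g n)"
proof -
  have "(\<Sum>\<alpha>\<in>Wd d N. g (cnt \<alpha>)) = (\<Sum>n\<in>Idx d N. \<Sum>\<alpha>\<in>{\<alpha> \<in> Wd d N. cnt \<alpha> = n}. g (cnt \<alpha>))"
    by (rule sum.group[symmetric]) (auto simp: finite_Wd finite_Idx cnt_Wd)
  also have "\<dots> = (\<Sum>n\<in>Idx d N. (fact N / real (mfact d n)) * g n)"
  proof (rule sum.cong)
    fix n assume n: "n \<in> Idx d N"
    have "(\<Sum>\<alpha>\<in>{\<alpha> \<in> Wd d N. cnt \<alpha> = n}. g (cnt \<alpha>)) = real (card {\<alpha> \<in> Wd d N. cnt \<alpha> = n}) * g n"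
      by simp
    also have "real (card {\<alpha> \<in> Wd d N. cnt \<alpha> = n}) = fact N / real (mfact d n)"
    proof -
      have "real (card {\<alpha> \<in> Wd d N. cnt \<alpha> = n} * mfact d n) = real (fact N)"
        using card_fib[OF n] by (simp only:)
      then have "real (card {\<alpha> \<in> Wd d N. cnt \<alpha> = n}) * real (mfact d n) = fact N"
        by (simp only: of_nat_mult of_nat_fact)
      moreover have "real (mfact d n) > 0" using mfact_pos[of d n] by simp
      ultimately show ?thesis by (simp add: eq_divide_eq)
    qed
    finally show "(\<Sum>\<alpha>\<in>{\<alpha> \<in> Wd d N. cnt \<alpha> = n}. g (cnt \<alpha>)) = (fact N / real (mfact d n)) * g n" .
  qed simp
  finally show ?thesis .
qed

lemma Wd_Suc: "Wd d (Suc N) = (\<lambda>(j, \<alpha>). j # \<alpha>) ` ({..<d} \<times> Wd d N)"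
proof (intro equalityI subsetI)
  fix \<beta> assume "\<beta> \<in> Wd d (Suc N)"
  then obtain j \<alpha> where "\<beta> = j # \<alpha>" "j < d" "\<alpha> \<in> Wd d N"
    by (cases \<beta>) (auto simp: Wd_def)
  then show "\<beta> \<in> (\<lambda>(j, \<alpha>). j # \<alpha>) ` ({..<d} \<times> Wd d N)" by force
qed (auto simp: Wd_def)

lemma Wd_0: "Wd d 0 = {[]}" by (auto simp: Wd_def)



lemma mpow_transfer:
  assumes "\<forall>j\<in>set js. \<forall>x. T j (\<iota> x) = \<iota> (A j x)"
  shows "foldr (\<lambda>j g. (T j ^^ n j) \<circ> g) js id (\<iota> x) = \<iota> (foldr (\<lambda>j g. (A j ^^ n j) \<circ> g) js id x)"
  using assms
proof (induction js arbitrary: x)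
  case Nil then show ?case by simp
next
  case (Cons j js)
  have fp: "(T j ^^ p) (\<iota> y) = \<iota> ((A j ^^ p) y)" for p y
    by (induction p) (use Cons.prems in auto)
  show ?case using Cons by (simp add: fp)
qed

locale setting =
  fixes d :: nat and \<iota> :: "'m::chilbert \<Rightarrow> ((nat \<Rightarrow> nat) \<Rightarrow> 'y::chilbert)"
  assumes lin: "fun_clinear \<iota>" and inj: "inj \<iota>" and sub: "range \<iota> \<subseteq> arv d"
    and inv_adj: "\<forall>j<d. \<forall>m. arv_adj d j (\<iota> m) \<in> range \<iota>"
begin

definition Aop :: "nat \<Rightarrow> 'm \<Rightarrow> 'm" where "Aop j x = inv \<iota> (arv_adj d j (\<iota> x))"
definition Cop :: "'m \<Rightarrow> 'y" where "Cop x = \<iota> x (\<lambda>_. 0)"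
definition wop :: "nat list \<Rightarrow> 'm \<Rightarrow> 'm" where "wop \<alpha> = foldr (\<lambda>j g. Aop j \<circ> g) \<alpha> id"

lemma wop_Nil[simp]: "wop [] x = x" by (simp add: wop_def)
lemma wop_Cons[simp]: "wop (j # \<alpha>) x = Aop j (wop \<alpha> x)" by (simp add: wop_def)

lemma iota_arv: "\<iota> x \<in> arv d" using sub by auto
lemma iota_off: "n \<notin> mi d \<Longrightarrow> \<iota> x n = 0" using iota_arv[of x] by (simp add: arv_def)
lemma iota_add: "\<iota> (x + y) = (\<lambda>n. \<iota> x n + \<iota> y n)" using lin by (simp add: fun_clinear_def)
lemma iota_scaleC: "\<iota> (a *\<^sub>C x) = (\<lambda>n. a *\<^sub>C \<iota> x n)" using lin by (simp add: fun_clinear_def)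
lemma inv_iota[simp]: "inv \<iota> (\<iota> x) = x" using inj by simp

lemma adj_iota: "j < d \<Longrightarrow> arv_adj d j (\<iota> x) = \<iota> (Aop j x)"
  unfolding Aop_def using inv_adj by (simp add: f_inv_into_f)

lemma iota_Aop: assumes j: "j < d" shows "\<iota> (Aop j x) = shop d (ej j) (\<iota> x)"
proof -
  have "\<iota> (Aop j x) = arv_adj d j (\<iota> x)" using adj_iota[OF j] by simp
  also have "\<dots> = shop d (ej j) (\<iota> x)" by (rule arv_adj_eq[OF j iota_arv])
  finally show ?thesis .
qed

lemma Aop_add: "j < d \<Longrightarrow> Aop j (x + y) = Aop j x + Aop j y"
  by (rule injD[OF inj]) (simp add: iota_Aop iota_add shop_add)

lemma Aop_scaleC: "j < d \<Longrightarrow> Aop j (a *\<^sub>C x) = a *\<^sub>C Aop j x"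
  by (rule injD[OF inj]) (simp add: iota_Aop iota_scaleC shop_scaleC)

lemma Aop_scaleR: "j < d \<Longrightarrow> Aop j (r *\<^sub>R x) = r *\<^sub>R Aop j x"
  by (simp add: scaleR_scaleC Aop_scaleC)

lemma Cop_add: "Cop (x + y) = Cop x + Cop y" by (simp add: Cop_def iota_add)
lemma Cop_scaleC: "Cop (a *\<^sub>C x) = a *\<^sub>C Cop x" by (simp add: Cop_def iota_scaleC)
lemma Cop_scaleR: "Cop (r *\<^sub>R x) = r *\<^sub>R Cop x" by (simp add: scaleR_scaleC Cop_scaleC)

lemma Aop_comm: "i < d \<Longrightarrow> j < d \<Longrightarrow> Aop i (Aop j x) = Aop j (Aop i x)"
  by (rule injD[OF inj]) (simp add: iota_Aop shop_shop ej_mi madd_def add.commute)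

lemma iota_wop: "set \<alpha> \<subseteq> {..<d} \<Longrightarrow> \<iota> (wop \<alpha> x) = shop d (cnt \<alpha>) (\<iota> x)"
proof (induction \<alpha>)
  case Nil then show ?case by (simp add: cnt_Nil shop_zero iota_off)
next
  case (Cons j \<alpha>)
  then show ?case by (simp add: iota_Aop shop_shop ej_mi cnt_mi cnt_Cons)
qed

lemma iota_funpow: "j < d \<Longrightarrow> \<iota> ((Aop j ^^ p) x) = shop d (\<lambda>i. if i = j then p else 0) (\<iota> x)"
proof (induction p)
  case 0
  have "(\<lambda>i::nat. if i = j then (0::nat) else 0) = (\<lambda>_. 0)" by auto
  then show ?case using shop_zero[of d "\<iota> x"] iota_off by simp
next
  case (Suc p)
  have m: "(\<lambda>i. if i = j then p else 0) \<in> mi d" using Suc.prems by (simp add: mi_def)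
  have e: "madd (ej j) (\<lambda>i. if i = j then p else 0) = (\<lambda>i. if i = j then Suc p else 0)"
    by (auto simp: madd_def ej_def)
  show ?case using Suc by (simp add: iota_Aop shop_shop ej_mi m e)
qed

lemma iota_foldr:
  assumes "distinct js" "set js \<subseteq> {..<d}"
  shows "\<iota> (foldr (\<lambda>j g. (Aop j ^^ n j) \<circ> g) js id x) = shop d (\<lambda>i. if i \<in> set js then n i else 0) (\<iota> x)"
  using assms
proof (induction js)
  case Nil then show ?case using shop_zero[of d "\<iota> x"] iota_off by simp
next
  case (Cons j js)
  have m1: "(\<lambda>i. if i = j then n j else 0) \<in> mi d" using Cons.prems by (simp add: mi_def)
  have m2: "(\<lambda>i. if i \<in> set js then n i else 0) \<in> mi d" using Cons.prems by (auto simp: mi_def)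
  have e: "madd (\<lambda>i. if i = j then n j else 0) (\<lambda>i. if i \<in> set js then n i else 0)
      = (\<lambda>i. if i \<in> set (j # js) then n i else 0)"
    using Cons.prems by (auto simp: madd_def)
  show ?case using Cons by (simp add: iota_funpow shop_shop m1 m2 e)
qed

lemma iota_mpow: "n \<in> mi d \<Longrightarrow> \<iota> (mpow d Aop n x) = shop d n (\<iota> x)"
proof -
  assume n: "n \<in> mi d"
  have eq: "(\<lambda>i. if i \<in> set [0..<d] then n i else 0) = n" using n by (auto simp: mi_def)
  have "\<iota> (foldr (\<lambda>j g. (Aop j ^^ n j) \<circ> g) [0..<d] id x) = shop d (\<lambda>i. if i \<in> set [0..<d] then n i else 0) (\<iota> x)"
    by (rule iota_foldr) auto
  then show ?thesis unfolding mpow_def by (simp only: eq)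
qed

lemma mpow_adj: "mpow d (arv_adj d) n (\<iota> x) = \<iota> (mpow d Aop n x)"
  unfolding mpow_def
proof (rule mpow_transfer[where \<iota> = \<iota> and A = Aop and T = "arv_adj d"])
  show "\<forall>j\<in>set [0..<d]. \<forall>x. arv_adj d j (\<iota> x) = \<iota> (Aop j x)" by (simp add: adj_iota)
qed

lemma wop_mpow: "set \<alpha> \<subseteq> {..<d} \<Longrightarrow> wop \<alpha> x = mpow d Aop (cnt \<alpha>) x"
  by (rule injD[OF inj]) (simp add: iota_wop iota_mpow cnt_mi)

lemma w0: "arv_w d (\<lambda>_. 0) = 1" by (simp add: arv_w_def mfact_def mabs_def)

lemma Cop_shop: "s \<in> mi d \<Longrightarrow> shop d s f (\<lambda>_. 0) = arv_w d s *\<^sub>R f s"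
  by (simp add: shop_def zero_mi w0)

lemma obs_eq: "obs d Cop Aop x = \<iota> x"
proof
  fix n show "obs d Cop Aop x n = \<iota> x n"
  proof (cases "n \<in> mi d")
    case True
    have "Cop (mpow d Aop n x) = arv_w d n *\<^sub>R \<iota> x n"
      using True by (simp add: Cop_def iota_mpow Cop_shop)
    moreover have "fact (mabs d n) / real (mfact d n) * arv_w d n = 1"
      using mfact_pos[of d n] by (simp add: arv_w_def)
    ultimately show ?thesis using True arv_w_pos[of d n] by (simp add: obs_def)
  next
    case False then show ?thesis by (simp add: obs_def iota_off)
  qed
qed

lemma Cop_wop: "set \<alpha> \<subseteq> {..<d} \<Longrightarrow> Cop (wop \<alpha> x) = arv_w d (cnt \<alpha>) *\<^sub>R \<iota> x (cnt \<alpha>)"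
  by (simp add: Cop_def iota_wop Cop_shop cnt_mi)

end


definition Ed :: "nat \<Rightarrow> nat \<Rightarrow> (nat \<Rightarrow> nat) set" where "Ed d N = {n \<in> mi d. mabs d n < N}"

lemma Ed_UN: "Ed d N = (\<Union>k<N. Idx d k)" by (auto simp: Ed_def Idx_def)
lemma finite_Ed: "finite (Ed d N)"
proof -
  have "finite (\<Union>k<N. Idx d k)" using finite_Idx by blast
  then show ?thesis by (simp only: Ed_UN)
qed

lemma sum_Ed: "(\<Sum>n\<in>Ed d N. g n) = (\<Sum>k<N. \<Sum>n\<in>Idx d k. g n)"
proof -
  have "(\<Sum>k<N. \<Sum>n\<in>{n \<in> Ed d N. mabs d n = k}. g n) = (\<Sum>n\<in>Ed d N. g n)"
    by (rule sum.group[OF finite_Ed finite_lessThan]) (auto simp: Ed_def)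
  moreover have "\<And>k. k \<in> {..<N} \<Longrightarrow> {n \<in> Ed d N. mabs d n = k} = Idx d k"
    by (auto simp: Ed_def Idx_def)
  ultimately show ?thesis by simp
qed

lemma Ed_filterlim: "filterlim (Ed d) (finite_subsets_at_top (mi d)) sequentially"
  unfolding filterlim_finite_subsets_at_top
proof (intro allI impI)
  fix X assume X: "finite X \<and> X \<subseteq> mi d"
  let ?M = "Suc (\<Sum>n\<in>X. mabs d n)"
  have "\<forall>N\<ge>?M. finite (Ed d N) \<and> X \<subseteq> Ed d N \<and> Ed d N \<subseteq> mi d"
  proof (intro allI impI conjI)
    fix N assume N: "?M \<le> N"
    show "X \<subseteq> Ed d N"
    proof
      fix n assume n: "n \<in> X"
      have "mabs d n \<le> (\<Sum>n\<in>X. mabs d n)" using X n by (intro member_le_sum) auto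
      then show "n \<in> Ed d N" using N n X by (auto simp: Ed_def)
    qed
    show "finite (Ed d N)" by (rule finite_Ed)
    show "Ed d N \<subseteq> mi d" by (auto simp: Ed_def)
  qed
  then show "\<forall>\<^sub>F N in sequentially. finite (Ed d N) \<and> X \<subseteq> Ed d N \<and> Ed d N \<subseteq> mi d"
    by (intro eventually_sequentiallyI[of ?M]) simp
qed

context setting
begin

definition Tn :: "nat \<Rightarrow> 'm \<Rightarrow> real" where "Tn N x = (\<Sum>\<alpha>\<in>Wd d N. (norm (wop \<alpha> x))\<^sup>2)"
definition Bn :: "nat \<Rightarrow> 'm \<Rightarrow> real" where "Bn N x = (\<Sum>\<alpha>\<in>Wd d N. (norm (Cop (wop \<alpha> x)))\<^sup>2)"

lemma Tn_0: "Tn 0 x = (norm x)\<^sup>2" by (simp add: Tn_def Wd_0)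

lemma Tn_nonneg: "Tn N x \<ge> 0" by (simp add: Tn_def sum_nonneg)

lemma Tn_Suc: "Tn (Suc N) x = (\<Sum>\<alpha>\<in>Wd d N. \<Sum>j<d. (norm (Aop j (wop \<alpha> x)))\<^sup>2)"
proof -
  have inj: "inj_on (\<lambda>(j, \<alpha>). j # \<alpha>) ({..<d} \<times> Wd d N)" by (auto simp: inj_on_def)
  have "Tn (Suc N) x = (\<Sum>p\<in>{..<d} \<times> Wd d N. (norm (wop ((\<lambda>(j, \<alpha>). j # \<alpha>) p) x))\<^sup>2)"
    unfolding Tn_def Wd_Suc by (rule sum.reindex[OF inj, unfolded comp_def])
  also have "\<dots> = (\<Sum>j<d. \<Sum>\<alpha>\<in>Wd d N. (norm (Aop j (wop \<alpha> x)))\<^sup>2)"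
    by (simp add: sum.cartesian_product split_def)
  also have "\<dots> = (\<Sum>\<alpha>\<in>Wd d N. \<Sum>j<d. (norm (Aop j (wop \<alpha> x)))\<^sup>2)"
    by (rule sum.swap)
  finally show ?thesis .
qed

lemma step_le:
  assumes H: "\<forall>m. (\<Sum>j<d. (norm (Aop j m))\<^sup>2) \<le> (norm m)\<^sup>2 - (norm (Cop m))\<^sup>2"
  shows "Tn (Suc N) x \<le> Tn N x - Bn N x"
proof -
  have "Tn (Suc N) x \<le> (\<Sum>\<alpha>\<in>Wd d N. (norm (wop \<alpha> x))\<^sup>2 - (norm (Cop (wop \<alpha> x)))\<^sup>2)"
    unfolding Tn_Suc by (rule sum_mono) (use H in blast)
  then show ?thesis by (simp add: Tn_def Bn_def sum_subtractf)
qed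

lemma step_eq:
  assumes H: "\<forall>m. (\<Sum>j<d. (norm (Aop j m))\<^sup>2) = (norm m)\<^sup>2 - (norm (Cop m))\<^sup>2"
  shows "Tn (Suc N) x = Tn N x - Bn N x"
proof -
  have "Tn (Suc N) x = (\<Sum>\<alpha>\<in>Wd d N. (norm (wop \<alpha> x))\<^sup>2 - (norm (Cop (wop \<alpha> x)))\<^sup>2)"
    unfolding Tn_Suc by (rule sum.cong) (use H in auto)
  then show ?thesis by (simp add: Tn_def Bn_def sum_subtractf)
qed

lemma accum_le:
  assumes H: "\<forall>m. (\<Sum>j<d. (norm (Aop j m))\<^sup>2) \<le> (norm m)\<^sup>2 - (norm (Cop m))\<^sup>2"
  shows "(\<Sum>k<N. Bn k x) + Tn N x \<le> (norm x)\<^sup>2"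
proof (induction N)
  case 0 then show ?case by (simp add: Tn_0)
next
  case (Suc N) then show ?case using step_le[OF H, of N x] by simp
qed

lemma accum_eq:
  assumes H: "\<forall>m. (\<Sum>j<d. (norm (Aop j m))\<^sup>2) = (norm m)\<^sup>2 - (norm (Cop m))\<^sup>2"
  shows "(\<Sum>k<N. Bn k x) + Tn N x = (norm x)\<^sup>2"
proof (induction N)
  case 0 then show ?case by (simp add: Tn_0)
next
  case (Suc N) then show ?case using step_eq[OF H, of N x] by simp
qed

lemma Bn_eq: "Bn k x = (\<Sum>n\<in>Idx d k. arv_w d n * (norm (\<iota> x n))\<^sup>2)"
proof -
  have "Bn k x = (\<Sum>\<alpha>\<in>Wd d k. (\<lambda>n. (arv_w d n)\<^sup>2 * (norm (\<iota> x n))\<^sup>2) (cnt \<alpha>))"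
    unfolding Bn_def
  proof (rule sum.cong)
    fix \<alpha> assume "\<alpha> \<in> Wd d k"
    then have "set \<alpha> \<subseteq> {..<d}" by (simp add: Wd_def)
    then show "(norm (Cop (wop \<alpha> x)))\<^sup>2 = (\<lambda>n. (arv_w d n)\<^sup>2 * (norm (\<iota> x n))\<^sup>2) (cnt \<alpha>)"
      using arv_w_pos[of d "cnt \<alpha>"] by (simp add: Cop_wop abs_of_pos power_mult_distrib)
  qed simp
  also have "\<dots> = (\<Sum>n\<in>Idx d k. (fact k / real (mfact d n)) * ((arv_w d n)\<^sup>2 * (norm (\<iota> x n))\<^sup>2))"
    by (rule sum_Wd)
  also have "\<dots> = (\<Sum>n\<in>Idx d k. arv_w d n * (norm (\<iota> x n))\<^sup>2)"
  proof (rule sum.cong)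
    fix n assume n: "n \<in> Idx d k"
    have "fact k / real (mfact d n) * arv_w d n = 1"
      using n mfact_pos[of d n] by (simp add: arv_w_def Idx_def)
    then show "(fact k / real (mfact d n)) * ((arv_w d n)\<^sup>2 * (norm (\<iota> x n))\<^sup>2) = arv_w d n * (norm (\<iota> x n))\<^sup>2"
      by (simp add: power2_eq_square algebra_simps)
  qed simp
  finally show ?thesis .
qed

lemma Tn_eq: "Tn N x = (\<Sum>n\<in>Idx d N. (fact N / real (mfact d n)) * (norm (mpow d Aop n x))\<^sup>2)"
proof -
  have "Tn N x = (\<Sum>\<alpha>\<in>Wd d N. (\<lambda>n. (norm (mpow d Aop n x))\<^sup>2) (cnt \<alpha>))"
    unfolding Tn_def by (rule sum.cong) (auto simp: Wd_def wop_mpow)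
  also have "\<dots> = (\<Sum>n\<in>Idx d N. (fact N / real (mfact d n)) * (norm (mpow d Aop n x))\<^sup>2)"
    by (rule sum_Wd)
  finally show ?thesis .
qed

definition gx :: "'m \<Rightarrow> (nat \<Rightarrow> nat) \<Rightarrow> real" where "gx x n = arv_w d n * (norm (\<iota> x n))\<^sup>2"

lemma partial_eq: "(\<Sum>n\<in>Ed d N. gx x n) = (\<Sum>k<N. Bn k x)"
  by (simp add: sum_Ed Bn_eq gx_def)

lemma partial_tendsto: "(\<lambda>N. \<Sum>k<N. Bn k x) \<longlonglongrightarrow> infsum (gx x) (mi d)"
proof -
  have s: "gx x summable_on mi d" using iota_arv[of x] by (simp add: arv_def gx_def[abs_def])
  have "(sum (gx x) \<longlongrightarrow> infsum (gx x) (mi d)) (finite_subsets_at_top (mi d))"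
    using has_sum_infsum[OF s] by (simp add: has_sum_def)
  from filterlim_compose[OF this Ed_filterlim]
  show ?thesis by (simp add: partial_eq)
qed

lemma arv_norm_gx: "arv_norm d (\<iota> x) = sqrt (infsum (gx x) (mi d))"
  by (simp add: arv_norm_def gx_def[abs_def])

lemma gx_nonneg: "infsum (gx x) (mi d) \<ge> 0"
  by (rule infsum_nonneg) (simp add: gx_def arv_w_pos less_imp_le)

end


context setting
begin

lemma exobs: "exactly_observable \<iota> d Cop Aop"
proof -
  have o: "obs d Cop Aop = \<iota>" by (rule ext) (rule obs_eq)
  show ?thesis unfolding exactly_observable_def o
    by (intro conjI exI[of _ 1]) auto
qed

lemma range_obs: "range \<iota> = range (obs d Cop Aop)"
proof -
  have o: "obs d Cop Aop = \<iota>" by (rule ext) (rule obs_eq)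
  show ?thesis by (simp add: o)
qed

lemma comm: "commutative_tuple d Aop"
  unfolding commutative_tuple_def by (auto simp: fun_eq_iff Aop_comm)

lemma bclin_ops:
  assumes H: "\<forall>m. (\<Sum>j<d. (norm (Aop j m))\<^sup>2) \<le> (norm m)\<^sup>2 - (norm (Cop m))\<^sup>2"
  shows "bclin Cop" "\<forall>j<d. bclin (Aop j)"
proof -
  have Cb: "norm (Cop m) \<le> norm m * 1" for m
  proof -
    have "(norm (Cop m))\<^sup>2 \<le> (norm m)\<^sup>2" using H[rule_format, of m] sum_nonneg[of "{..<d}" "\<lambda>j. (norm (Aop j m))\<^sup>2", OF zero_le_power2]
      by linarith
    then have "norm (Cop m) \<le> norm m" by (rule power2_le_imp_le) simp
    then show ?thesis by simp
  qed
  have Ab: "norm (Aop j m) \<le> norm m * 1" if j: "j < d" for j m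
  proof -
    have "(norm (Aop j m))\<^sup>2 \<le> (\<Sum>j<d. (norm (Aop j m))\<^sup>2)"
      by (rule member_le_sum) (use j in auto)
    also have "\<dots> \<le> (norm m)\<^sup>2" using H[rule_format, of m] zero_le_power2[of "norm (Cop m)"] by linarith
    finally have "norm (Aop j m) \<le> norm m" by (rule power2_le_imp_le) simp
    then show ?thesis by simp
  qed
  show "bclin Cop" unfolding bclin_def
    by (intro conjI allI bounded_linear_intro[where f=Cop and K=1] Cop_add Cop_scaleR Cb Cop_scaleC)
  show "\<forall>j<d. bclin (Aop j)"
  proof (intro allI impI)
    fix j assume j: "j < d"
    show "bclin (Aop j)" unfolding bclin_def
      by (intro conjI allI bounded_linear_intro[where f="Aop j" and K=1] Aop_add[OF j] Aop_scaleR[OF j] Ab[OF j] Aop_scaleC[OF j])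
  qed
qed

lemma contr_incl:
  assumes H: "\<forall>m. (\<Sum>j<d. (norm (Aop j m))\<^sup>2) \<le> (norm m)\<^sup>2 - (norm (Cop m))\<^sup>2"
  shows "contractively_included \<iota> d"
  unfolding contractively_included_def
proof
  fix m
  have "infsum (gx m) (mi d) \<le> (norm m)\<^sup>2"
  proof (rule LIMSEQ_le_const2[OF partial_tendsto])
    show "\<exists>N. \<forall>n\<ge>N. (\<Sum>k<n. Bn k m) \<le> (norm m)\<^sup>2"
    proof (intro exI allI impI)
      fix n show "(\<Sum>k<n. Bn k m) \<le> (norm m)\<^sup>2"
        using accum_le[OF H, where N=n and x=m] Tn_nonneg[where N=n and x=m] by linarith
    qed
  qed
  then have "sqrt (infsum (gx m) (mi d)) \<le> sqrt ((norm m)\<^sup>2)" by (rule real_sqrt_le_mono)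
  then show "arv_norm d (\<iota> m) \<le> norm m" by (simp add: arv_norm_gx)
qed

lemma main1:
  assumes H0: "\<forall>m. (\<Sum>j<d. (norm (inv \<iota> (arv_adj d j (\<iota> m))))\<^sup>2)
              \<le> (norm m)\<^sup>2 - (norm (\<iota> m (\<lambda>_. 0)))\<^sup>2"
  shows "(\<exists>(C :: 'm \<Rightarrow> 'y) (A :: nat \<Rightarrow> 'm \<Rightarrow> 'm).
            contractive_pair d C A \<and> commutative_tuple d A \<and>
            range \<iota> = range (obs d C A) \<and> exactly_observable \<iota> d C A)
        \<and> contractively_included \<iota> d"
proof -
  have H: "\<forall>m. (\<Sum>j<d. (norm (Aop j m))\<^sup>2) \<le> (norm m)\<^sup>2 - (norm (Cop m))\<^sup>2"
    using H0 by (simp add: Aop_def Cop_def)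
  have cp: "contractive_pair d Cop Aop"
  proof -
    have c3: "\<forall>x. (norm (Cop x))\<^sup>2 + (\<Sum>j<d. (norm (Aop j x))\<^sup>2) \<le> (norm x)\<^sup>2"
    proof
      fix x show "(norm (Cop x))\<^sup>2 + (\<Sum>j<d. (norm (Aop j x))\<^sup>2) \<le> (norm x)\<^sup>2"
        using H[rule_format, of x] by linarith
    qed
    show ?thesis unfolding contractive_pair_def using bclin_ops[OF H] c3 by blast
  qed
  show ?thesis using cp comm range_obs exobs contr_incl[OF H] by blast
qed

lemma main2:
  assumes H0: "\<forall>m. (\<Sum>j<d. (norm (inv \<iota> (arv_adj d j (\<iota> m))))\<^sup>2)
              = (norm m)\<^sup>2 - (norm (\<iota> m (\<lambda>_. 0)))\<^sup>2"
  shows "(\<exists>(C :: 'm \<Rightarrow> 'y) (A :: nat \<Rightarrow> 'm \<Rightarrow> 'm).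
            isometric_pair d C A \<and> commutative_tuple d A \<and>
            range \<iota> = range (obs d C A) \<and> exactly_observable \<iota> d C A)
        \<and> contractively_included \<iota> d
        \<and> (isometrically_included \<iota> d \<longleftrightarrow>
             (\<forall>m. (\<lambda>N. \<Sum>n\<in>{n\<in>mi d. mabs d n = N}.
                      (fact N / real (mfact d n)) *
                      (norm (inv \<iota> (mpow d (arv_adj d) n (\<iota> m))))\<^sup>2)
                   \<longlonglongrightarrow> 0))"
proof -
  have He: "\<forall>m. (\<Sum>j<d. (norm (Aop j m))\<^sup>2) = (norm m)\<^sup>2 - (norm (Cop m))\<^sup>2"
    using H0 by (simp add: Aop_def Cop_def)
  then have H: "\<forall>m. (\<Sum>j<d. (norm (Aop j m))\<^sup>2) \<le> (norm m)\<^sup>2 - (norm (Cop m))\<^sup>2" by simp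
  have ip: "isometric_pair d Cop Aop"
  proof -
    have c3: "\<forall>x. (norm (Cop x))\<^sup>2 + (\<Sum>j<d. (norm (Aop j x))\<^sup>2) = (norm x)\<^sup>2"
    proof
      fix x show "(norm (Cop x))\<^sup>2 + (\<Sum>j<d. (norm (Aop j x))\<^sup>2) = (norm x)\<^sup>2"
        using He[rule_format, of x] by linarith
    qed
    show ?thesis unfolding isometric_pair_def using bclin_ops[OF H] c3 by blast
  qed
  have tail: "(\<lambda>N. \<Sum>n\<in>{n\<in>mi d. mabs d n = N}.
                      (fact N / real (mfact d n)) *
                      (norm (inv \<iota> (mpow d (arv_adj d) n (\<iota> m))))\<^sup>2) = (\<lambda>N. Tn N m)" for m
    by (rule ext) (simp add: Tn_eq mpow_adj Idx_def)
  have per: "(arv_norm d (\<iota> m) = norm m) \<longleftrightarrow> (\<lambda>N. Tn N m) \<longlonglongrightarrow> 0" for m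
  proof -
    have T: "(\<lambda>N. Tn N m) = (\<lambda>N. (norm m)\<^sup>2 - (\<Sum>k<N. Bn k m))"
    proof (rule ext)
      fix N
      have "(\<Sum>k<N. Bn k m) + Tn N m = (norm m)\<^sup>2" by (rule accum_eq[OF He])
      then show "Tn N m = (norm m)\<^sup>2 - (\<Sum>k<N. Bn k m)" by linarith
    qed
    have lim: "(\<lambda>N. Tn N m) \<longlonglongrightarrow> (norm m)\<^sup>2 - infsum (gx m) (mi d)"
      unfolding T by (intro tendsto_diff tendsto_const partial_tendsto)
    have "(arv_norm d (\<iota> m) = norm m) \<longleftrightarrow> infsum (gx m) (mi d) = (norm m)\<^sup>2"
    proof
      assume "arv_norm d (\<iota> m) = norm m"
      then have "sqrt (infsum (gx m) (mi d)) = norm m" by (simp add: arv_norm_gx)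
      then have "(sqrt (infsum (gx m) (mi d)))\<^sup>2 = (norm m)\<^sup>2" by simp
      then show "infsum (gx m) (mi d) = (norm m)\<^sup>2" using gx_nonneg[of m] by simp
    next
      assume "infsum (gx m) (mi d) = (norm m)\<^sup>2"
      then show "arv_norm d (\<iota> m) = norm m" by (simp add: arv_norm_gx)
    qed
    also have "\<dots> \<longleftrightarrow> (\<lambda>N. Tn N m) \<longlonglongrightarrow> 0"
    proof
      assume "infsum (gx m) (mi d) = (norm m)\<^sup>2"
      then show "(\<lambda>N. Tn N m) \<longlonglongrightarrow> 0" using lim by simp
    next
      assume "(\<lambda>N. Tn N m) \<longlonglongrightarrow> 0"
      with lim have "(norm m)\<^sup>2 - infsum (gx m) (mi d) = 0" by (rule LIMSEQ_unique)
      then show "infsum (gx m) (mi d) = (norm m)\<^sup>2" by simp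
    qed
    finally show ?thesis .
  qed
  have iff: "isometrically_included \<iota> d \<longleftrightarrow> (\<forall>m. (\<lambda>N. Tn N m) \<longlonglongrightarrow> 0)"
    unfolding isometrically_included_def using per by blast
  have iff2: "isometrically_included \<iota> d \<longleftrightarrow>
             (\<forall>m. (\<lambda>N. \<Sum>n\<in>{n\<in>mi d. mabs d n = N}.
                      (fact N / real (mfact d n)) *
                      (norm (inv \<iota> (mpow d (arv_adj d) n (\<iota> m))))\<^sup>2)
                   \<longlonglongrightarrow> 0)"
    unfolding iff tail by (rule refl)
  show ?thesis using ip comm range_obs exobs contr_incl[OF H] iff2 by blast
qed

end

theorem theorem3p16:
  fixes d :: nat
    and \<iota> :: "'m::chilbert \<Rightarrow> ((nat \<Rightarrow> nat) \<Rightarrow> 'y::chilbert)"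
  assumes d_pos: "1 \<le> d"
    and lin: "fun_clinear \<iota>"
    and inj: "inj \<iota>"
    and sub: "range \<iota> \<subseteq> arv d"
    and inv_adj: "\<forall>j<d. \<forall>m. arv_adj d j (\<iota> m) \<in> range \<iota>"
  shows
    "((\<forall>m. (\<Sum>j<d. (norm (inv \<iota> (arv_adj d j (\<iota> m))))\<^sup>2)
              \<le> (norm m)\<^sup>2 - (norm (\<iota> m (\<lambda>_. 0)))\<^sup>2) \<longrightarrow>
        (\<exists>(C :: 'm \<Rightarrow> 'y) (A :: nat \<Rightarrow> 'm \<Rightarrow> 'm).
            contractive_pair d C A \<and> commutative_tuple d A \<and>
            range \<iota> = range (obs d C A) \<and> exactly_observable \<iota> d C A)
        \<and> contractively_included \<iota> d)
   \<and>
     ((\<forall>m. (\<Sum>j<d. (norm (inv \<iota> (arv_adj d j (\<iota> m))))\<^sup>2)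
              = (norm m)\<^sup>2 - (norm (\<iota> m (\<lambda>_. 0)))\<^sup>2) \<longrightarrow>
        (\<exists>(C :: 'm \<Rightarrow> 'y) (A :: nat \<Rightarrow> 'm \<Rightarrow> 'm).
            isometric_pair d C A \<and> commutative_tuple d A \<and>
            range \<iota> = range (obs d C A) \<and> exactly_observable \<iota> d C A)
        \<and> contractively_included \<iota> d
        \<and> (isometrically_included \<iota> d \<longleftrightarrow>
             (\<forall>m. (\<lambda>N. \<Sum>n\<in>{n\<in>mi d. mabs d n = N}.
                      (fact N / real (mfact d n)) *
                      (norm (inv \<iota> (mpow d (arv_adj d) n (\<iota> m))))\<^sup>2)
                   \<longlonglongrightarrow> 0)))"
proof -
  interpret setting d \<iota> using lin inj sub inv_adj by unfold_locales
  show ?thesis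
    apply (rule conjI)
     apply (rule impI, erule main1)
    apply (rule impI, erule main2)
    done
qed

end
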